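(* Let $\alpha=(\alpha_1,\alpha_2,\alpha_3)\in\mathbb{C}^3$ and $\beta=(\beta_1,\beta_2,\beta_3)\in\mathbb{C}^3$ both satisfy the triangle inequality. Then there exists an automorphism $\varphi\in\operatorname{Aut}(\mathbb{D}^3)$ of the tridisc such that $\varphi(M_\alpha)=M_\beta$.
   Context: $\mathbb{D}$ denotes the open unit disc in $\mathbb{C}$. For $\alpha=(\alpha_1,\alpha_2,\alpha_3)\in\mathbb{C}^3\setminus\{0\}$ let $$M_\alpha=\{(z_1,z_2,z_3)\in\mathbb{D}^3:\ \alpha_1z_1+\alpha_2z_2+\alpha_3z_3=\overline{\alpha_1}z_2z_3+\overline{\alpha_2}z_1z_3+\overline{\alpha_3}z_1z_2\}.$$ A triple $\alpha\in\mathbb{C}^3$ satisfies the triangle inequality if $|\alpha_i|+|\alpha_j|>|\alpha_k|$ for every permutation $(i,j,k)$ of $(1,2,3)$. *)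

theory Defs
  imports "HOL-Analysis.Analysis"
begin

definition tridisc :: "(complex^3) set" where
  "tridisc = {z. \<forall>i. norm (z$i) < 1}"

definition M_set :: "complex^3 \<Rightarrow> (complex^3) set" where
  "M_set a = {z \<in> tridisc.
     a$1 * z$1 + a$2 * z$2 + a$3 * z$3
       = cnj (a$1) * z$2 * z$3 + cnj (a$2) * z$1 * z$3 + cnj (a$3) * z$1 * z$2}"

definition triangle_ineq :: "complex^3 \<Rightarrow> bool" where
  "triangle_ineq a \<longleftrightarrow>
     (\<forall>i j k::3. i \<noteq> j \<and> j \<noteq> k \<and> i \<noteq> k \<longrightarrow> norm (a$i) + norm (a$j) > norm (a$k))"

definition holomorphic3_on :: "(complex^3 \<Rightarrow> complex^3) \<Rightarrow> (complex^3) set \<Rightarrow> bool" where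
  "holomorphic3_on f S \<longleftrightarrow>
     (\<forall>z\<in>S. \<exists>L. (f has_derivative L) (at z) \<and> (\<forall>(c::complex) x. L (c *s x) = c *s L x))"

definition Aut_tridisc :: "(complex^3 \<Rightarrow> complex^3) set" where
  "Aut_tridisc = {\<phi>. bij_betw \<phi> tridisc tridisc \<and> holomorphic3_on \<phi> tridisc
                       \<and> holomorphic3_on (inv_into tridisc \<phi>) tridisc}"

end

theory Submission
  imports Defs "HOL-Complex_Analysis.Complex_Analysis"
begin


abbreviation "disc \<equiv> ball (0::complex) 1"

definition PM :: "(3 \<Rightarrow> complex \<Rightarrow> complex) \<Rightarrow> complex^3 \<Rightarrow> complex^3" where
 "PM G z = (\<chi> j. G j (z$j))"

lemma tridisc_iff: "z \<in> tridisc \<longleftrightarrow> (\<forall>j. z$j \<in> disc)"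
  by (simp add: tridisc_def)

lemma open_tridisc: "open tridisc"
proof -
  have eq: "tridisc = (\<Inter>j\<in>UNIV. (\<lambda>z. z$j) -` disc)" by (auto simp: tridisc_def)
  have op: "open ((\<lambda>z::complex^3. z$j) -` disc)" for j
    by (rule open_vimage) (auto intro: continuous_intros)
  show ?thesis unfolding eq by (intro open_INT) (simp_all add: op)
qed

lemma PM_sum: "PM G z = (\<Sum>j\<in>UNIV. axis j (G j (z$j)))"
  by (simp add: PM_def vec_eq_iff axis_def sum.If_cases)

lemma bl_axis: "bounded_linear (axis j :: complex \<Rightarrow> complex^3)"
proof -
  have "linear (axis j :: complex \<Rightarrow> complex^3)"
    by (rule linearI) (auto simp: axis_def vec_eq_iff)
  then show ?thesis by (simp add: linear_conv_bounded_linear)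
qed

lemma holo_PM:
  assumes "\<And>j. G j holomorphic_on disc"
  shows "holomorphic3_on (PM G) tridisc"
unfolding holomorphic3_on_def
proof
  fix z assume z: "z \<in> tridisc"
  have "\<And>j. (G j has_field_derivative deriv (G j) (z$j)) (at (z$j))"
    using assms z by (meson holomorphic_derivI open_ball tridisc_iff)
  then have d: "\<And>j. ((\<lambda>z. axis j (G j (z$j))) has_derivative (\<lambda>h. axis j (deriv (G j) (z$j) * h$j))) (at z)"
  proof -
    fix j
    assume "\<And>j. (G j has_field_derivative deriv (G j) (z$j)) (at (z$j))"
    then have g: "(G j has_derivative (\<lambda>x. deriv (G j) (z$j) * x)) (at (z$j))"
      using has_field_derivative_imp_has_derivative by blast
    have p: "((\<lambda>z::complex^3. z$j) has_derivative (\<lambda>h. h$j)) (at z)"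
      by (rule bounded_linear_imp_has_derivative) (rule bounded_linear_vec_nth)
    have "((\<lambda>z. G j (z$j)) has_derivative (\<lambda>h. deriv (G j) (z$j) * h$j)) (at z)"
      using has_derivative_compose[OF p g] by (simp add: o_def)
    then show "((\<lambda>z. axis j (G j (z$j))) has_derivative (\<lambda>h. axis j (deriv (G j) (z$j) * h$j))) (at z)"
      using bounded_linear.has_derivative[OF bl_axis] by blast
  qed
  have "(PM G has_derivative (\<lambda>h. \<Sum>j\<in>UNIV. axis j (deriv (G j) (z$j) * h$j))) (at z)"
    unfolding PM_sum by (rule has_derivative_sum) (use d in auto)
  moreover have "\<forall>(c::complex) x. (\<Sum>j\<in>UNIV. axis j (deriv (G j) (z$j) * (c *s x)$j)) = c *s (\<Sum>j\<in>UNIV. axis j (deriv (G j) (z$j) * x$j))"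
    by (simp add: vec_eq_iff axis_def sum.If_cases)
  ultimately show "\<exists>L. (PM G has_derivative L) (at z) \<and> (\<forall>(c::complex) x. L (c *s x) = c *s L x)"
    by blast
qed



definition dauto :: "(complex \<Rightarrow> complex) \<Rightarrow> bool" where
 "dauto g \<longleftrightarrow> bij_betw g disc disc \<and> g holomorphic_on disc \<and> inv_into disc g holomorphic_on disc"

lemma dautoI:
  assumes "\<And>z. z \<in> disc \<Longrightarrow> f z \<in> disc" "\<And>z. z \<in> disc \<Longrightarrow> g z \<in> disc"
    "\<And>z. z \<in> disc \<Longrightarrow> g (f z) = z" "\<And>z. z \<in> disc \<Longrightarrow> f (g z) = z"
    "f holomorphic_on disc" "g holomorphic_on disc"
  shows "dauto f"
proof -
  have b: "bij_betw f disc disc" by (rule bij_betw_byWitness[where f'=g]) (use assms in auto)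
  have "inv_into disc f z = g z" if "z \<in> disc" for z
    by (metis assms(2,3,4) b bij_betw_imp_inj_on inv_into_f_f that)
  then have "inv_into disc f holomorphic_on disc" using holomorphic_cong assms(6) by blast
  then show ?thesis unfolding dauto_def using b assms(5) by blast
qed

lemma dauto_facts:
  assumes "dauto f" "z \<in> disc"
  shows "f z \<in> disc" "inv_into disc f z \<in> disc" "inv_into disc f (f z) = z" "f (inv_into disc f z) = z"
proof -
  have b: "bij_betw f disc disc" using assms(1) by (simp add: dauto_def)
  show "f z \<in> disc" using b assms(2) bij_betwE by blast
  show "inv_into disc f z \<in> disc" using bij_betw_inv_into[OF b] assms(2) bij_betwE by blast
  show "inv_into disc f (f z) = z" using b assms(2) by (simp add: bij_betw_def inv_into_f_f)
  show "f (inv_into disc f z) = z" using b assms(2) by (simp add: bij_betw_def f_inv_into_f)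
qed

lemma dauto_holo: "dauto f \<Longrightarrow> f holomorphic_on disc" "dauto f \<Longrightarrow> inv_into disc f holomorphic_on disc"
  by (auto simp: dauto_def)

lemma dauto_inv: "dauto f \<Longrightarrow> dauto (inv_into disc f)"
  by (rule dautoI[where g=f]) (use dauto_facts[of f] dauto_holo[of f] in blast)+

lemma dauto_comp:
  assumes f: "dauto f" and g: "dauto g"
  shows "dauto (g \<circ> f)"
proof (rule dautoI[where g="inv_into disc f \<circ> inv_into disc g"])
  show "(g \<circ> f) holomorphic_on disc"
    by (rule holomorphic_on_compose_gen[OF dauto_holo(1)[OF f] dauto_holo(1)[OF g]]) (use dauto_facts(1)[OF f] in auto)
  show "(inv_into disc f \<circ> inv_into disc g) holomorphic_on disc"
    by (rule holomorphic_on_compose_gen[OF dauto_holo(2)[OF g] dauto_holo(2)[OF f]]) (use dauto_facts(2)[OF g] in auto)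
qed (use dauto_facts[OF f] dauto_facts[OF g] in auto)

lemma dauto_rot:
  assumes "norm c = 1"
  shows "dauto (\<lambda>z. c * z)"
proof (rule dautoI[where g="\<lambda>z. cnj c * z"])
  have cc: "cnj c * c = 1" using complex_norm_square[of c] assms by (simp add: mult.commute)
  have cc2: "c * cnj c = 1" using complex_norm_square[of c] assms by simp
  show "\<And>z. z \<in> disc \<Longrightarrow> cnj c * (c * z) = z" using cc by (simp add: mult.assoc[symmetric])
  show "\<And>z. z \<in> disc \<Longrightarrow> c * (cnj c * z) = z" using cc2 by (simp add: mult.assoc[symmetric])
qed (auto simp: norm_mult assms intro!: holomorphic_intros)

definition mobab :: "real \<Rightarrow> real \<Rightarrow> complex \<Rightarrow> complex" where
  "mobab a b w = (of_real a * w + of_real b) / (of_real a + of_real b * w)"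

lemma mob_ineq:
  fixes a b :: real and w :: complex
  assumes "a > \<bar>b\<bar>" "norm w < 1"
  shows "norm (of_real a * w + of_real b) < norm (of_real a + of_real b * w)"
proof -
  define x y where "x = Re w" "y = Im w"
  have n1: "(norm (of_real a * w + of_real b))^2 = (a*x+b)^2 + (a*y)^2"
    by (simp add: cmod_power2 x_y_def)
  have n2: "(norm (of_real a + of_real b * w))^2 = (a+b*x)^2 + (b*y)^2"
    by (simp add: cmod_power2 x_y_def)
  have "(cmod w)^2 < 1^2" by (rule power_strict_mono) (use assms in auto)
  then have w2: "x^2 + y^2 < 1" by (simp add: cmod_power2 x_y_def)
  have "b^2 < a^2" using assms(1) by (metis abs_ge_zero power2_abs power_strict_mono zero_less_numeral)
  then have ab: "a^2 - b^2 > 0" by simp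
  have "(a^2 - b^2) * (x^2 + y^2 - 1) < 0" using ab w2 by (simp add: mult_pos_neg)
  then have "(norm (of_real a * w + of_real b))^2 < (norm (of_real a + of_real b * w))^2"
    unfolding n1 n2 by (simp add: algebra_simps power2_eq_square)
  then show ?thesis by (simp add: power_less_imp_less_base)
qed

lemma mob_den:
  fixes a b :: real and w :: complex
  assumes "a > \<bar>b\<bar>" "norm w < 1"
  shows "of_real a + of_real b * w \<noteq> 0"
  using mob_ineq[OF assms] by auto

lemma mob_in:
  assumes "a > \<bar>b\<bar>" "norm w < 1"
  shows "norm (mobab a b w) < 1"
  using mob_ineq[OF assms] mob_den[OF assms] by (simp add: mobab_def norm_divide divide_less_eq)

lemma mob_inv:
  assumes "a > \<bar>b\<bar>" "norm w < 1"
  shows "mobab a (-b) (mobab a b w) = w"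
proof -
  have d: "of_real a + of_real b * w \<noteq> 0" by (rule mob_den[OF assms])
  have "b^2 < a^2" using assms(1) by (metis abs_ge_zero power2_abs power_strict_mono zero_less_numeral)
  then have "a*a - b*b \<noteq> 0" by (simp add: power2_eq_square)
  then have ab: "complex_of_real a * complex_of_real a - complex_of_real b * complex_of_real b \<noteq> 0"
    by (metis of_real_diff of_real_eq_0_iff of_real_mult)
  define A B where "A = complex_of_real a" "B = complex_of_real b"
  have e1: "A * ((A*w+B)/(A+B*w)) - B = (A*A - B*B)*w/(A+B*w)" using d by (simp add: A_B_def field_simps)
  have e2: "A - B*((A*w+B)/(A+B*w)) = (A*A - B*B)/(A+B*w)" using d by (simp add: A_B_def field_simps)
  have "mobab a (-b) (mobab a b w) = (A * ((A*w+B)/(A+B*w)) - B) / (A - B*((A*w+B)/(A+B*w)))"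
    by (simp add: mobab_def A_B_def)
  also have "\<dots> = w" unfolding e1 e2 using d ab by (simp add: A_B_def)
  finally show ?thesis .
qed

lemma dauto_mob:
  assumes "a > \<bar>b\<bar>"
  shows "dauto (mobab a b)"
proof (rule dautoI[where g="mobab a (-b)"])
  have a2: "a > \<bar>-b\<bar>" using assms by simp
  show "\<And>z. z \<in> disc \<Longrightarrow> mobab a b z \<in> disc" using mob_in[OF assms] by simp
  show "\<And>z. z \<in> disc \<Longrightarrow> mobab a (-b) z \<in> disc" using mob_in[OF a2] by simp
  show "\<And>z. z \<in> disc \<Longrightarrow> mobab a (-b) (mobab a b z) = z" using mob_inv[OF assms] by simp
  show "\<And>z. z \<in> disc \<Longrightarrow> mobab a b (mobab a (-b) z) = z" using mob_inv[OF a2] by simp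
  show "mobab a b holomorphic_on disc" unfolding mobab_def
    using mob_den[OF assms] by (auto intro!: holomorphic_intros)
  show "mobab a (-b) holomorphic_on disc" unfolding mobab_def
    using mob_den[OF a2] by (auto intro!: holomorphic_intros)
qed


lemma holo3_transfer:
  assumes "holomorphic3_on f S" "open S" "\<And>x. x \<in> S \<Longrightarrow> f x = g x"
  shows "holomorphic3_on g S"
  unfolding holomorphic3_on_def
proof
  fix z assume z: "z \<in> S"
  then obtain L where L: "(f has_derivative L) (at z)" "\<forall>(c::complex) x. L (c *s x) = c *s L x"
    using assms(1) unfolding holomorphic3_on_def by blast
  have "(g has_derivative L) (at z)"
    by (rule has_derivative_transform_within_open[OF L(1) assms(2) z]) (use assms(3) in auto)
  then show "\<exists>L. (g has_derivative L) (at z) \<and> (\<forall>(c::complex) x. L (c *s x) = c *s L x)" using L(2) by blast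
qed

lemma PM_in: "(\<And>j. dauto (G j)) \<Longrightarrow> z \<in> tridisc \<Longrightarrow> PM G z \<in> tridisc"
  using dauto_facts(1)[simplified] unfolding tridisc_iff PM_def by simp

lemma PM_inv:
  assumes "\<And>j. dauto (G j)" "z \<in> tridisc"
  shows "PM (\<lambda>j. inv_into disc (G j)) (PM G z) = z" "PM G (PM (\<lambda>j. inv_into disc (G j)) z) = z"
  using assms unfolding tridisc_iff PM_def by (simp_all add: dauto_facts vec_eq_iff)

lemma PM_Aut:
  assumes "\<And>j. dauto (G j)"
  shows "PM G \<in> Aut_tridisc"
proof -
  let ?H = "\<lambda>j. inv_into disc (G j)"
  have H: "\<And>j. dauto (?H j)" using dauto_inv assms by blast
  have b: "bij_betw (PM G) tridisc tridisc"
    by (rule bij_betw_byWitness[where f'="PM ?H"]) (use PM_in PM_inv assms H in auto)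
  have e: "PM ?H y = inv_into tridisc (PM G) y" if "y \<in> tridisc" for y
    by (metis PM_in PM_inv(2) H assms b bij_betw_imp_inj_on inv_into_f_f that)
  have "holomorphic3_on (inv_into tridisc (PM G)) tridisc"
    by (rule holo3_transfer[OF holo_PM open_tridisc e]) (use dauto_holo H in auto)
  moreover have "holomorphic3_on (PM G) tridisc"
    by (rule holo_PM) (use dauto_holo assms in auto)
  ultimately show ?thesis using b unfolding Aut_tridisc_def by blast
qed

lemma PM_image:
  assumes "\<And>j. dauto (G j)" "A \<subseteq> tridisc" "B \<subseteq> tridisc"
    "\<And>z. z \<in> tridisc \<Longrightarrow> PM G z \<in> B \<longleftrightarrow> z \<in> A"
  shows "PM G ` A = B"
proof
  show "PM G ` A \<subseteq> B" using assms(2,4) by auto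
  show "B \<subseteq> PM G ` A"
  proof
    fix y assume y: "y \<in> B"
    let ?z = "PM (\<lambda>j. inv_into disc (G j)) y"
    have yt: "y \<in> tridisc" using y assms(3) by auto
    have zt: "?z \<in> tridisc" using PM_in[OF dauto_inv[OF assms(1)] yt] .
    have "PM G ?z = y" using PM_inv(2)[OF assms(1) yt] .
    then show "y \<in> PM G ` A" using assms(4)[OF zt] y by (metis image_eqI)
  qed
qed

definition pol :: "complex^3 \<Rightarrow> complex^3 \<Rightarrow> complex" where
  "pol a z = a$1*z$1 + a$2*z$2 + a$3*z$3 - (cnj (a$1)*z$2*z$3 + cnj (a$2)*z$1*z$3 + cnj (a$3)*z$1*z$2)"

lemma M_pol: "M_set a = {z \<in> tridisc. pol a z = 0}"
  by (auto simp: M_set_def pol_def)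

definition one3 :: "complex^3" where "one3 = (\<chi> j. 1)"

lemma rot_id:
  fixes a1 a2 a3 b1 b2 b3 u1 u2 u3 q1 q2 q3 c z1 z2 z3 r1 r2 r3 :: complex
  assumes "u1*q1 = 1" "u2*q2=1" "u3*q3=1" "a1 = r1*u1" "a2 = r2*u2" "a3 = r3*u3"
    "b1 = r1 * q1" "b2 = r2 * q2" "b3 = r3 * q3" "c = q1*q2*q3"
  shows "r1*(c*u1*z1) + r2*(c*u2*z2) + r3*(c*u3*z3) - (r1*(c*u2*z2)*(c*u3*z3) + r2*(c*u1*z1)*(c*u3*z3) + r3*(c*u1*z1)*(c*u2*z2))
     = c*(a1*z1+a2*z2+a3*z3 - (b1*z2*z3 + b2*z1*z3 + b3*z1*z2))"
  using assms by algebra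

lemma mob_id:
  fixes s1 s2 s3 w1 w2 w3 :: complex
  assumes "s1+s2+s3 = 3 * s1 * s2 * s3"
  shows "((1+s1)*w1 + (1-s1))*((1+s2) + (1-s2)*w2)*((1+s3) + (1-s3)*w3)
   + ((1+s2)*w2 + (1-s2))*((1+s1) + (1-s1)*w1)*((1+s3) + (1-s3)*w3)
   + ((1+s3)*w3 + (1-s3))*((1+s1) + (1-s1)*w1)*((1+s2) + (1-s2)*w2)
   - ((1+s1) + (1-s1)*w1)*((1+s2)*w2 + (1-s2))*((1+s3)*w3 + (1-s3))
   - ((1+s2) + (1-s2)*w2)*((1+s1)*w1 + (1-s1))*((1+s3)*w3 + (1-s3))
   - ((1+s3) + (1-s3)*w3)*((1+s1)*w1 + (1-s1))*((1+s2)*w2 + (1-s2))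
   = 4*((s2+s3)*w1 + (s1+s3)*w2 + (s1+s2)*w3 - (s2+s3)*w2*w3 - (s1+s3)*w1*w3 - (s1+s2)*w1*w2)"
  using assms by algebra

lemma frac_poly:
  fixes N1 N2 N3 E1 E2 E3 :: complex
  assumes "E1 \<noteq> 0" "E2 \<noteq> 0" "E3 \<noteq> 0"
  shows "N1/E1 + N2/E2 + N3/E3 - (N2/E2*(N3/E3) + N1/E1*(N3/E3) + N1/E1*(N2/E2))
    = (N1*E2*E3 + N2*E1*E3 + N3*E1*E2 - E1*N2*N3 - E2*N1*N3 - E3*N1*N2) / (E1*E2*E3)"
  using assms by (simp add: field_simps)

lemma mobab_S: "mobab (1+s) (1-s) w = ((1 + of_real s)*w + (1 - of_real s)) / ((1 + of_real s) + (1 - of_real s)*w)"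
  by (simp add: mobab_def)

lemma mob_poly:
  fixes s1 s2 s3 :: real and w1 w2 w3 S1 S2 S3 :: complex
  assumes "s1+s2+s3 = 3 * s1 * s2 * s3" "s1 > 0" "s2 > 0" "s3 > 0" "norm w1 < 1" "norm w2 < 1" "norm w3 < 1"
    and S: "S1 = of_real s1" "S2 = of_real s2" "S3 = of_real s3"
  defines "m1 \<equiv> mobab (1+s1) (1-s1) w1" and "m2 \<equiv> mobab (1+s2) (1-s2) w2" and "m3 \<equiv> mobab (1+s3) (1-s3) w3"
  defines "E1 \<equiv> (1+S1) + (1-S1) * w1" and "E2 \<equiv> (1+S2) + (1-S2) * w2"
     and "E3 \<equiv> (1+S3) + (1-S3) * w3"
  shows "E1 \<noteq> 0" "E2 \<noteq> 0" "E3 \<noteq> 0"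
   "m1 + m2 + m3 - (m2*m3 + m1*m3 + m1*m2) = 4*((S2+S3)*w1 + (S1+S3)*w2 + (S1+S2)*w3 - (S2+S3)*w2*w3 - (S1+S3)*w1*w3 - (S1+S2)*w1*w2) / (E1*E2*E3)"
proof -
  have "\<bar>1-s1\<bar> < 1+s1" using assms by auto
  from mob_den[OF this assms(5)] show d1: "E1 \<noteq> 0" unfolding E1_def S by simp
  have "\<bar>1-s2\<bar> < 1+s2" using assms by auto
  from mob_den[OF this assms(6)] show d2: "E2 \<noteq> 0" unfolding E2_def S by simp
  have "\<bar>1-s3\<bar> < 1+s3" using assms by auto
  from mob_den[OF this assms(7)] show d3: "E3 \<noteq> 0" unfolding E3_def S by simp
  have c: "S1 + S2 + S3 = 3 * S1 * S2 * S3"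
    using arg_cong[OF assms(1), of complex_of_real] S by simp
  have "m1 + m2 + m3 - (m2*m3 + m1*m3 + m1*m2) = 
    (((1+S1)*w1 + (1-S1))*E2*E3
   + ((1+S2)*w2 + (1-S2))*E1*E3
   + ((1+S3)*w3 + (1-S3))*E1*E2
   - E1*((1+S2)*w2 + (1-S2))*((1+S3)*w3 + (1-S3))
   - E2*((1+S1)*w1 + (1-S1))*((1+S3)*w3 + (1-S3))
   - E3*((1+S1)*w1 + (1-S1))*((1+S2)*w2 + (1-S2))) / (E1*E2*E3)"
    unfolding m1_def m2_def m3_def mobab_S S[symmetric] E1_def E2_def E3_def
    by (rule frac_poly[OF d1[unfolded E1_def] d2[unfolded E2_def] d3[unfolded E3_def]])
  also have "\<dots> = 4*((S2+S3)*w1 + (S1+S3)*w2 + (S1+S2)*w3 - (S2+S3)*w2*w3 - (S1+S3)*w1*w3 - (S1+S2)*w1*w2) / (E1*E2*E3)"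
    unfolding E1_def E2_def E3_def mob_id[OF c, of w1 w2 w3] ..
  finally show "m1 + m2 + m3 - (m2*m3 + m1*m3 + m1*m2) = 4*((S2+S3)*w1 + (S1+S3)*w2 + (S1+S2)*w3 - (S2+S3)*w2*w3 - (S1+S3)*w1*w3 - (S1+S2)*w1*w2) / (E1*E2*E3)" .
qed

lemma canon:
  assumes "triangle_ineq \<alpha>"
  shows "\<exists>G. (\<forall>j. dauto (G j)) \<and> PM G ` M_set \<alpha> = M_set one3"
proof -
  define r where "r j = norm (\<alpha>$j)" for j
  have t: "norm (\<alpha>$i) + norm (\<alpha>$j) > norm (\<alpha>$k)" if "i \<noteq> j" "j \<noteq> k" "i \<noteq> k" for i j k
    using assms that unfolding triangle_ineq_def by blast
  have tri: "r 1 + r 2 > r 3" "r 1 + r 3 > r 2" "r 2 + r 3 > r 1"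
    unfolding r_def using t[of 1 2 3] t[of 1 3 2] t[of 2 3 1] by simp_all
  have rnn: "r j \<ge> 0" for j unfolding r_def by simp
  have rpos: "r j > 0" for j
  proof -
    have "r 1 > 0" "r 2 > 0" "r 3 > 0" using tri rnn[of 1] rnn[of 2] rnn[of 3] by linarith+
    then show ?thesis by (metis exhaust_3)
  qed
  define R where "R = r 1 + r 2 + r 3"
  define s0 where "s0 j = R/2 - r j" for j
  have s0pos: "s0 j > 0" for j
  proof -
    have "s0 1 > 0" using tri unfolding s0_def R_def by (simp add: field_simps)
    moreover have "s0 2 > 0" using tri unfolding s0_def R_def by (simp add: field_simps)
    moreover have "s0 3 > 0" using tri unfolding s0_def R_def by (simp add: field_simps)
    ultimately have "s0 1 > 0" "s0 2 > 0" "s0 3 > 0" by auto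
    then show ?thesis by (metis exhaust_3)
  qed
  define P where "P = s0 1 * s0 2 * s0 3"
  define S where "S = s0 1 + s0 2 + s0 3"
  have Ppos: "P > 0" unfolding P_def using s0pos by simp
  have Spos: "S > 0" unfolding S_def using s0pos by (simp add: add_pos_pos)
  define \<mu> where "\<mu> = sqrt (S / (3 * P))"
  have mupos: "\<mu> > 0" unfolding \<mu>_def using Ppos Spos by simp
  have mu2: "\<mu>^2 = S/(3*P)" unfolding \<mu>_def using Ppos Spos by simp
  define s where "s j = \<mu> * s0 j" for j
  have spos: "s j > 0" for j unfolding s_def using mupos s0pos by simp
  have con: "s 1 + s 2 + s 3 = 3 * s 1 * s 2 * s 3"
  proof -
    have "3 * s 1 * s 2 * s 3 = \<mu> * (3 * P * \<mu>^2)" unfolding s_def P_def by (simp add: power2_eq_square algebra_simps)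
    also have "\<dots> = \<mu> * S" using mu2 Ppos by simp
    finally show ?thesis unfolding s_def S_def by (simp add: algebra_simps)
  qed
  have ssum: "s 2 + s 3 = \<mu> * r 1" "s 1 + s 3 = \<mu> * r 2" "s 1 + s 2 = \<mu> * r 3"
    unfolding s_def s0_def R_def by (simp_all add: field_simps)
  define u where "u j = \<alpha>$j / of_real (r j)" for j
  have nu: "norm (u j) = 1" for j unfolding u_def using rpos[of j] by (simp add: norm_divide r_def)
  have ucu: "u j * cnj (u j) = 1" for j using complex_norm_square[of "u j"] nu[of j] by simp
  have au: "\<alpha>$j = of_real (r j) * u j" for j unfolding u_def using rpos[of j] by simp
  have acu: "cnj (\<alpha>$j) = of_real (r j) * cnj (u j)" for j by (subst au) simp
  define c where "c = cnj (u 1) * cnj (u 2) * cnj (u 3)"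
  have nc: "norm c = 1" unfolding c_def by (simp add: norm_mult nu)
  have nlam: "norm (c * u j) = 1" for j by (simp add: norm_mult nu nc)
  define G where "G j = mobab (1 + s j) (1 - s j) \<circ> (\<lambda>z. (c * u j) * z)" for j
  have dG: "\<forall>j. dauto (G j)"
  proof
    fix j
    have "\<bar>1 - s j\<bar> < 1 + s j" using spos[of j] by auto
    then show "dauto (G j)" unfolding G_def by (intro dauto_comp dauto_rot nlam dauto_mob)
  qed
  have key: "PM G z \<in> M_set one3 \<longleftrightarrow> z \<in> M_set \<alpha>" if z: "z \<in> tridisc" for z
  proof -
    define w where "w j = c * u j * z$j" for j
    have nw: "norm (w j) < 1" for j using z unfolding w_def tridisc_iff by (simp add: norm_mult nu nc)
    have PMG: "PM G z $ j = mobab (1 + s j) (1 - s j) (w j)" for j by (simp add: PM_def G_def w_def)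
    define E where "E j = (1 + complex_of_real (s j)) + (1 - complex_of_real (s j)) * w j" for j
    note mp = mob_poly[OF con spos[of 1] spos[of 2] spos[of 3] nw[of 1] nw[of 2] nw[of 3] refl refl refl]
    have E0: "E 1 * E 2 * E 3 \<noteq> 0" using mp(1-3) unfolding E_def by simp
    have h1: "pol one3 (PM G z) = 4*((of_real (s 2) + of_real (s 3))*w 1 + (of_real (s 1) + of_real (s 3))*w 2 + (of_real (s 1) + of_real (s 2))*w 3
        - (of_real (s 2) + of_real (s 3))*w 2*w 3 - (of_real (s 1) + of_real (s 3))*w 1*w 3 - (of_real (s 1) + of_real (s 2))*w 1*w 2) / (E 1 * E 2 * E 3)"
      unfolding E_def using mp(4) by (simp add: pol_def one3_def PMG)
    have ss: "complex_of_real (s 2) + of_real (s 3) = of_real \<mu> * of_real (r 1)"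
      "complex_of_real (s 1) + of_real (s 3) = of_real \<mu> * of_real (r 2)"
      "complex_of_real (s 1) + of_real (s 2) = of_real \<mu> * of_real (r 3)"
      using ssum by (metis of_real_add of_real_mult)+
    define Q where "Q = of_real (r 1) * (c * u 1 * z$1) + of_real (r 2) * (c * u 2 * z$2) + of_real (r 3) * (c * u 3 * z$3)
      - (of_real (r 1) * (c * u 2 * z$2) * (c * u 3 * z$3) + of_real (r 2) * (c * u 1 * z$1) * (c * u 3 * z$3)
         + of_real (r 3) * (c * u 1 * z$1) * (c * u 2 * z$2))"
    have h2: "pol one3 (PM G z) = 4 * of_real \<mu> * Q / (E 1 * E 2 * E 3)"
      unfolding h1 ss Q_def w_def by (simp add: algebra_simps)
    have h3: "Q = c * pol \<alpha> z"
      unfolding Q_def pol_def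
      by (rule rot_id[OF ucu ucu ucu au au au acu acu acu c_def])
    have "pol one3 (PM G z) = 0 \<longleftrightarrow> pol \<alpha> z = 0"
      unfolding h2 h3 using E0 mupos nc by auto
    moreover have "PM G z \<in> tridisc" using PM_in dG z by blast
    ultimately show ?thesis using z by (simp add: M_pol)
  qed
  have "PM G ` M_set \<alpha> = M_set one3"
    by (rule PM_image) (use dG key in \<open>auto simp: M_pol\<close>)
  then show ?thesis using dG by blast
qed

theorem theorem1:
  fixes \<alpha> \<beta> :: "complex^3"
  assumes "triangle_ineq \<alpha>" and "triangle_ineq \<beta>"
  shows "\<exists>\<phi>\<in>Aut_tridisc. \<phi> ` M_set \<alpha> = M_set \<beta>"
proof -
  obtain Ga where Ga: "\<forall>j. dauto (Ga j)" "PM Ga ` M_set \<alpha> = M_set one3" using canon[OF assms(1)] by blast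
  obtain Gb where Gb: "\<forall>j. dauto (Gb j)" "PM Gb ` M_set \<beta> = M_set one3" using canon[OF assms(2)] by blast
  define Hb where "Hb j = inv_into disc (Gb j)" for j
  define H where "H j = Hb j \<circ> Ga j" for j
  have dHb: "dauto (Hb j)" for j unfolding Hb_def using Gb(1) by (simp add: dauto_inv)
  have dH: "dauto (H j)" for j unfolding H_def by (rule dauto_comp) (use Ga(1) dHb in auto)
  have PMH: "PM H = (\<lambda>z. PM Hb (PM Ga z))" by (rule ext) (simp add: PM_def H_def)
  have "PM H ` M_set \<alpha> = PM Hb ` (PM Ga ` M_set \<alpha>)" unfolding PMH by (simp only: image_image)
  also have "\<dots> = PM Hb ` (PM Gb ` M_set \<beta>)" using Ga(2) Gb(2) by simp
  also have "\<dots> = (\<lambda>z. PM Hb (PM Gb z)) ` M_set \<beta>" by (simp only: image_image)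
  also have "\<dots> = (\<lambda>z. z) ` M_set \<beta>"
  proof (rule image_cong[OF refl])
    fix z assume "z \<in> M_set \<beta>"
    then show "PM Hb (PM Gb z) = z"
      unfolding Hb_def by (intro PM_inv(1)) (use Gb(1) in \<open>auto simp: M_pol\<close>)
  qed
  also have "\<dots> = M_set \<beta>" by simp
  finally have img: "PM H ` M_set \<alpha> = M_set \<beta>" .
  show ?thesis by (rule bexI[where x="PM H"]) (rule img, rule PM_Aut[OF dH])
qed

end
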